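(* For all $N\in\mathbb Z_{\ge1}$, $m\in\mathbb Z$ and primitive $k$th roots of unity $\xi$, $$A_m(\xi,N)=\frac{(-1)^N\xi^{-m}}{N!}\sum_{u+v+j_1+\dots+j_N=N+m}B_v^{(m+1)}\beta_{j_1}(\xi)\beta_{j_2}(\xi^2)\cdots\beta_{j_N}(\xi^N)\frac{1^{j_1}2^{j_2}\cdots N^{j_N}}{u!\,v!\,j_1!\cdots j_N!},$$ the sum over all $u,v,j_1,\dots,j_N\in\mathbb Z_{\ge0}$ (an empty sum being $0$).
   Context: $(q)_N:=(1-q)\cdots(1-q^N)$ and $A_m(\xi,N)$ is the coefficient of $(q-\xi)^m$ in the Laurent expansion of $1/(q)_N$ about $q=\xi$. Nörlund polynomials: $(z/(e^z-1))^\alpha=\sum_n B_n^{(\alpha)}z^n/n!$. Apostol–Bernoulli numbers: $\frac{z}{\rho e^z-1}=\sum_{n\ge0}\beta_n(\rho)z^n/n!$ for $\rho\in\mathbb C$. *)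

theory Defs
  imports "HOL-Complex_Analysis.Complex_Analysis"
begin

definition qpoch :: "complex \<Rightarrow> nat \<Rightarrow> complex" where
  "qpoch q N = (\<Prod>i = 1..N. 1 - q ^ i)"

definition A_coeff :: "int \<Rightarrow> complex \<Rightarrow> nat \<Rightarrow> complex" where
  "A_coeff m \<xi> N = fls_nth (laurent_expansion (\<lambda>q. 1 / qpoch q N) \<xi>) m"

definition norlund :: "nat \<Rightarrow> int \<Rightarrow> complex" where
  "norlund n \<alpha> = fact n *
     fls_nth ((fls_X / fps_to_fls (fps_exp 1 - 1)) powi \<alpha>) (int n)"

definition apostol_bernoulli :: "complex \<Rightarrow> nat \<Rightarrow> complex" where
  "apostol_bernoulli \<rho> n = fact n *
     fls_nth (fls_X / fps_to_fls (fps_const \<rho> * fps_exp 1 - 1)) (int n)"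

definition primitive_root_of_unity :: "nat \<Rightarrow> complex \<Rightarrow> bool" where
  "primitive_root_of_unity k \<xi> \<longleftrightarrow> k \<ge> 1 \<and> \<xi> ^ k = 1 \<and> (\<forall>j\<in>{1..<k}. \<xi> ^ j \<noteq> 1)"

end

theory Submission
  imports Defs
begin


lemma fls_deriv_powi:
  fixes F :: "'a::field_char_0 fls"
  shows "fls_deriv (F powi n) = of_int n * F powi (n-1) * fls_deriv F"
proof (cases "n \<ge> 0")
  case True
  then obtain k where k: "n = int k" by (metis nonneg_eq_int)
  show ?thesis
  proof (cases k)
    case 0 thus ?thesis using k by simp
  next
    case (Suc j)
    have "n - 1 = int j" using k Suc by simp
    have e: "F powi n = F^k" "F powi (n-1) = F^j" using k \<open>n - 1 = int j\<close> by (metis power_int_of_nat)+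
    show ?thesis unfolding e fls_deriv_power using k Suc by simp
  qed
next
  case False
  define k where "k = nat (-n)"
  have k: "n = - int k" "k > 0" using False by (auto simp: k_def)
  show ?thesis
  proof (cases "F = 0")
    case True thus ?thesis using k by (simp add: power_int_def zero_power)
  next
    case F: False
    have e1: "F powi n = inverse (F ^ k)" using k by (simp add: power_int_def power_inverse)
    have e2: "F powi (n-1) = inverse (F ^ Suc k)" using k
      by (simp add: power_int_def nat_add_distrib power_inverse)
    have "fls_deriv (F powi n) = - inverse (F^k) * (of_nat k * F^(k-1) * fls_deriv F) * inverse (F^k)"
      unfolding e1 fls_inverse_deriv_divring fls_deriv_power ..
    also have "\<dots> = of_int n * inverse (F ^ Suc k) * fls_deriv F"
      using F k(2) unfolding k(1) by (cases k) (simp_all add: field_simps)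
    finally show ?thesis by (simp add: e2)
  qed
qed

lemma fls_compose_fps_X_intpow:
  assumes "G \<noteq> 0" "fps_nth G 0 = 0"
  shows "fls_compose_fps (fls_X_intpow n) G = fps_to_fls G powi n"
  using fls_compose_fps_powi[OF assms, of fls_X n] by simp

lemma fls_compose_fps_deriv:
  fixes G :: "'a::field_char_0 fps"
  assumes G: "G \<noteq> 0" "fps_nth G 0 = 0"
  shows "fls_deriv (fls_compose_fps F G) = fls_compose_fps (fls_deriv F) G * fps_to_fls (fps_deriv G)"
proof -
  define B where "B = fls_base_factor_to_fps F"
  define n where "n = fls_subdegree F"
  have F: "F = fps_to_fls B * fls_X_intpow n"
    unfolding B_def n_def
    by (metis fls_conv_base_factor_to_fps_shift_subdegree fls_X_intpow_times_conv_shift(2))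
  have dF: "fls_deriv F = fps_to_fls (fps_deriv B) * fls_X_intpow n + fps_to_fls B * (of_int n * fls_X_intpow (n-1))"
    unfolding F by (simp add: fls_deriv_X_intpow fls_deriv_fps_to_fls)
  have "fls_compose_fps F G = fps_to_fls (B oo G) * fps_to_fls G powi n"
    unfolding F using G by (simp add: fls_compose_fps_mult fls_compose_fps_X_intpow)
  hence "fls_deriv (fls_compose_fps F G) =
     fps_to_fls (B oo G) * (of_int n * fps_to_fls G powi (n-1) * fps_to_fls (fps_deriv G)) +
     fps_to_fls ((fps_deriv B oo G) * fps_deriv G) * fps_to_fls G powi n"
    using G by (simp add: fls_deriv_powi fls_deriv_fps_to_fls fps_compose_deriv)
  also have "\<dots> = fls_compose_fps (fls_deriv F) G * fps_to_fls (fps_deriv G)"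
    using fls_compose_fps_X_intpow[OF G, of "n-1"] fls_compose_fps_X_intpow[OF G, of "n"]
    unfolding dF using G
    by (simp add: fls_compose_fps_mult fls_compose_fps_add fls_compose_fps_X_intpow
         fls_times_fps_to_fls algebra_simps)
  finally show ?thesis .
qed

lemma fls_residue_compose:
  fixes G :: "'a::field_char_0 fps"
  assumes G: "fps_nth G 0 = 0" "fps_nth G 1 \<noteq> 0"
  shows "fls_residue (fls_compose_fps H G * fps_to_fls (fps_deriv G)) = fls_residue H"
proof -
  have G0: "G \<noteq> 0" using G by auto
  define c where "c = fls_residue H"
  have "fls_residue (H - fls_const c * fls_X_intpow (-1)) = 0"
    unfolding c_def by (simp add: fls_residue_fls_const_times)
  then obtain K where K: "fls_deriv K = H - fls_const c * fls_X_intpow (-1)"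
    using fls_residue_nonzero_ex_antiderivative by blast
  have H: "H = fls_deriv K + fls_const c * fls_X_intpow (-1)" using K by simp
  have "subdegree G = 1" by (rule subdegreeI) (use G in \<open>auto simp: less_Suc_eq\<close>)
  hence sd: "fls_subdegree (fps_to_fls G) = 1"
    by (simp add: fls_subdegree_fls_to_fps)
  have "fls_compose_fps H G * fps_to_fls (fps_deriv G) =
    fls_deriv (fls_compose_fps K G) + fls_const c * (fls_deriv (fps_to_fls G) * inverse (fps_to_fls G))"
    unfolding H using G G0 fls_compose_fps_X_intpow[OF G0 G(1), of "-1"]
    by (simp add: fls_compose_fps_add fls_compose_fps_mult fls_compose_fps_X_intpow
        fls_compose_fps_deriv fls_deriv_fps_to_fls power_int_minus algebra_simps)
  also have "fls_residue \<dots> = c"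
    using fls_residue_deriv_times_inverse_eq_subdegree(1)[of "fps_to_fls G"] sd
    by (simp add: fls_residue_fls_const_times)
  finally show ?thesis unfolding c_def .
qed



lemma laurent_A:
  "laurent_expansion (\<lambda>q. 1 / qpoch q N) \<xi> =
     inverse (\<Prod>i = 1..N. 1 - (fls_const \<xi> + fls_X) ^ i)"
proof (rule laurent_expansion_eqI)
  have "(\<lambda>x. inverse (\<Prod>i = 1..N. 1 - (\<xi> + x) ^ i)) has_laurent_expansion
          inverse (\<Prod>i = 1..N. 1 - (fls_const \<xi> + fls_X) ^ i)"
    by (intro laurent_expansion_intros)
  thus "(\<lambda>x. 1 / qpoch (\<xi> + x) N) has_laurent_expansion
          inverse (\<Prod>i = 1..N. 1 - (fls_const \<xi> + fls_X) ^ i)"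
    by (simp add: qpoch_def divide_inverse)
qed



lemma finite_PiE_filter: "finite A \<Longrightarrow> finite B \<Longrightarrow> finite {j \<in> A \<rightarrow>\<^sub>E B. P j}"
  by (rule finite_subset[OF _ finite_PiE[of A "\<lambda>_. B"]]) auto

lemma fps_prod_nth_PiE:
  fixes F :: "'i \<Rightarrow> 'a::comm_ring_1 fps"
  assumes "finite I"
  shows "(\<Prod>i\<in>I. F i) $ n = (\<Sum>j \<in> {j \<in> I \<rightarrow>\<^sub>E {..n}. sum j I = n}. \<Prod>i\<in>I. F i $ j i)"
  using assms
proof (induction I arbitrary: n rule: finite_induct)
  case empty
  show ?case
  proof (cases "n = 0")
    case True
    hence "{j \<in> {} \<rightarrow>\<^sub>E {..n}. sum j {} = n} = {\<lambda>_. undefined}" by auto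
    thus ?thesis using True by simp
  next
    case False
    hence "{j \<in> {} \<rightarrow>\<^sub>E {..n}. sum j {} = n} = {}" by auto
    thus ?thesis using False by simp
  qed
next
  case (insert a A n)
  define S where "S = (SIGMA k:{0..n}. {j \<in> A \<rightarrow>\<^sub>E {..n-k}. sum j A = n - k})"
  have "(\<Prod>i\<in>insert a A. F i) $ n = (\<Sum>k=0..n. F a $ k * (\<Prod>i\<in>A. F i) $ (n - k))"
    using insert by (simp add: fps_mult_nth)
  also have "\<dots> = (\<Sum>k=0..n. \<Sum>j \<in> {j \<in> A \<rightarrow>\<^sub>E {..n-k}. sum j A = n - k}. F a $ k * (\<Prod>i\<in>A. F i $ j i))"
    by (simp add: insert.IH sum_distrib_left)
  also have "\<dots> = (\<Sum>(k,j)\<in>S. F a $ k * (\<Prod>i\<in>A. F i $ j i))"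
    unfolding S_def by (rule sum.Sigma) (use insert.hyps in \<open>auto intro: finite_PiE_filter\<close>)
  also have "\<dots> = (\<Sum>j \<in> {j \<in> insert a A \<rightarrow>\<^sub>E {..n}. sum j (insert a A) = n}. \<Prod>i\<in>insert a A. F i $ j i)"
  proof (rule sum.reindex_bij_witness[where j = "\<lambda>(k,j). j(a := k)" and i = "\<lambda>g. (g a, g(a := undefined))"])
    fix g assume g: "g \<in> {j \<in> insert a A \<rightarrow>\<^sub>E {..n}. sum j (insert a A) = n}"
    have sA: "sum g (insert a A) = g a + sum g A" using insert by simp
    have "sum (g(a := undefined)) A = sum g A"
      using insert.hyps by (intro sum.cong) auto
    moreover have "\<forall>i\<in>A. g i \<le> n - g a"
    proof
      fix i assume "i \<in> A"
      hence "g i \<le> sum g A" using insert.hyps by (intro member_le_sum) auto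
      thus "g i \<le> n - g a" using g sA by auto
    qed
    ultimately show "(g a, g(a := undefined)) \<in> S"
      using g sA insert.hyps unfolding S_def by (auto simp: PiE_iff)
    show "(case (g a, g(a := undefined)) of (k, j) \<Rightarrow> j(a := k)) = g" by auto
  next
    fix p assume p: "p \<in> S"
    obtain k j where kj: "p = (k, j)" by (cases p)
    with p have k: "k \<le> n" and j: "j \<in> A \<rightarrow>\<^sub>E {..n-k}" "sum j A = n - k"
      unfolding S_def by auto
    have ja: "j a = undefined" using j(1) insert.hyps(2) by (auto simp: PiE_iff extensional_def)
    have sj: "sum (j(a := k)) A = sum j A"
      using insert.hyps by (intro sum.cong) auto
    show "(case (case p of (k, j) \<Rightarrow> j(a := k)) of g \<Rightarrow> (g a, g(a := undefined))) = p"
      using kj ja by auto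
    show "(case p of (k, j) \<Rightarrow> j(a := k)) \<in> {j \<in> insert a A \<rightarrow>\<^sub>E {..n}. sum j (insert a A) = n}"
      using kj k j sj insert.hyps by (auto simp: PiE_iff)
    have "(\<Prod>i\<in>A. F i $ (j(a:=k)) i) = (\<Prod>i\<in>A. F i $ j i)"
      using insert.hyps by (intro prod.cong) auto
    thus "(\<Prod>i\<in>insert a A. F i $ (case p of (k, j) \<Rightarrow> j(a := k)) i) = (case p of (k, j) \<Rightarrow> F a $ k * (\<Prod>i\<in>A. F i $ j i))"
      using kj insert.hyps by simp
  qed
  finally show ?case .
qed



lemma fps_to_fls_prod: "fps_to_fls (\<Prod>i\<in>I. F i) = (\<Prod>i\<in>I. fps_to_fls (F i))"
  by (induction I rule: infinite_finite_induct) (auto simp: fls_times_fps_to_fls)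

lemma fls_compose_fps_prod:
  assumes "H \<noteq> 0" "fps_nth H 0 = 0"
  shows "fls_compose_fps (\<Prod>i\<in>I. F i) H = (\<Prod>i\<in>I. fls_compose_fps (F i) H)"
  by (induction I rule: infinite_finite_induct) (auto simp: fls_compose_fps_mult assms)

lemma Z_nth1:
  fixes c :: complex
  shows "fps_nth (fps_const c * fps_exp 1 ^ i - 1) 1 = c * of_nat i"
  unfolding fps_exp_power_mult by (simp add: fps_exp_nth)

lemma Z_nz:
  fixes c :: complex
  assumes "c \<noteq> 0" "i \<ge> 1"
  shows "fps_to_fls (fps_const c * fps_exp 1 ^ i - 1) \<noteq> 0"
    and "fls_subdegree (fps_to_fls (fps_const c * fps_exp 1 ^ i - 1)) \<le> 1"
proof -
  have "fps_nth (fps_const c * fps_exp 1 ^ i - 1) 1 \<noteq> 0"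
    using assms Z_nth1[of c i] by simp
  hence "fps_const c * fps_exp 1 ^ i - 1 \<noteq> 0" by (metis fps_zero_nth)
  thus "fps_to_fls (fps_const c * fps_exp 1 ^ i - 1) \<noteq> 0"
    using fps_to_fls_eq_0_iff by blast
  show "fls_subdegree (fps_to_fls (fps_const c * fps_exp 1 ^ i - 1)) \<le> 1"
    using \<open>fps_nth _ 1 \<noteq> 0\<close> by (intro fls_subdegree_leI) (simp add: fps_to_fls_nth)
qed

lemma D_closed:
  fixes c :: complex
  assumes "i \<ge> 1"
  shows "fls_compose_fps (fls_X / fps_to_fls (fps_const c * fps_exp 1 - 1)) (fps_const (of_nat i) * fps_X)
       = fls_const (of_nat i) * fls_X / fps_to_fls (fps_const c * fps_exp 1 ^ i - 1)"
proof -
  define H :: "complex fps" where "H = fps_const (of_nat i) * fps_X"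
  have H: "H \<noteq> 0" "fps_nth H 0 = 0" using assms by (auto simp: H_def fps_eq_iff)
  have "(fps_const c * fps_exp 1 - 1) oo H = fps_const c * fps_exp 1 ^ i - 1"
    unfolding H_def
    by (simp add: fps_compose_sub_distrib fps_const_mult_apply_left[symmetric] fps_exp_compose_linear
                  fps_exp_power_mult)
  moreover have "fls_compose_fps (fls_X / fps_to_fls (fps_const c * fps_exp 1 - 1)) H =
      fps_to_fls H / fps_to_fls ((fps_const c * fps_exp 1 - 1) oo H)"
    by (simp only: fls_compose_fps_divide[OF H] fls_compose_fps_X fls_compose_fps_to_fls[OF H])
  moreover have "fps_to_fls H = fls_const (of_nat i) * fls_X"
    by (simp add: H_def fls_times_fps_to_fls fps_const_to_fls)
  ultimately show ?thesis unfolding H_def by simp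
qed

lemma D_nth:
  fixes c :: complex
  assumes "i \<ge> 1"
  shows "fls_nth (fls_const (of_nat i) * fls_X / fps_to_fls (fps_const c * fps_exp 1 ^ i - 1)) (int j)
       = apostol_bernoulli c j / fact j * of_nat i ^ j"
proof -
  have "fls_nth (fls_const (of_nat i) * fls_X / fps_to_fls (fps_const c * fps_exp 1 ^ i - 1)) (int j)
     = fls_nth (fls_X / fps_to_fls (fps_const c * fps_exp 1 - 1)) (int j) * of_nat i powi int j"
    using assms by (subst D_closed[symmetric]) (auto simp: fls_nth_fls_compose_fps_linear)
  thus ?thesis by (simp add: apostol_bernoulli_def)
qed



lemma fls_const_prod: "fls_const (\<Prod>i\<in>I. f i) = (\<Prod>i\<in>I. fls_const (f i))"
  by (induction I rule: infinite_finite_induct) (auto simp flip: fls_const_mult_const)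

lemma fls_const_inverse: "fls_const (inverse (c::'a::field)) = inverse (fls_const c)"
proof (cases "c = 0")
  case False
  hence "fls_const (inverse c) * fls_const c = 1" by (simp add: fls_const_mult_const)
  thus ?thesis by (metis inverse_unique mult.commute)
qed simp

lemma integrand_eq:
  fixes \<xi> :: complex and m :: int
  assumes "\<xi> \<noteq> 0"
  shows "fps_to_fls (fps_const \<xi> * (fps_exp 1 - 1)) powi (-m-1) *
      inverse (\<Prod>i=1..N. 1 - (fls_const \<xi> + fps_to_fls (fps_const \<xi> * (fps_exp 1 - 1)))^i) *
      fps_to_fls (fps_deriv (fps_const \<xi> * (fps_exp 1 - 1)))
   = fls_const (\<xi> powi (-m) * (-1)^N / fact N) *
     (fls_X_intpow (-(int N + m) - 1) *
      (fps_to_fls (fps_exp 1) * (fls_X / fps_to_fls (fps_exp 1 - 1)) powi (m+1) *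
       (\<Prod>i=1..N. fls_const (of_nat i) * fls_X / fps_to_fls (fps_const (\<xi>^i) * fps_exp 1 ^ i - 1))))"
  (is "?L = ?R")
proof -
  define El where "El = fps_to_fls (fps_exp (1::complex))"
  define Q where "Q = fls_X / fps_to_fls (fps_exp (1::complex) - 1)"
  define Z where "Z = (\<lambda>i. fps_to_fls (fps_const (\<xi>^i) * fps_exp 1 ^ i - 1))"
  define D where "D = (\<lambda>i. fls_const (of_nat i) * fls_X / Z i)"
  define X where "X = (fls_X :: complex fls)"
  have X0: "X \<noteq> 0" by (simp add: X_def)
  have Z: "Z i = fls_const (\<xi>^i) * El^i - 1" for i
    by (simp add: Z_def El_def fps_to_fls_minus fls_times_fps_to_fls fps_const_to_fls fps_to_fls_power)
  have Znz: "Z i \<noteq> 0" if "i \<ge> 1" for i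
    using Z_nz(1)[of "\<xi>^i" i] that assms by (simp add: Z_def)
  have Em1nz: "El - 1 \<noteq> 0"
    using Z_nz(1)[of 1 1] by (simp add: El_def fps_to_fls_minus)
  have Em1: "fps_to_fls (fps_exp (1::complex) - 1) = El - 1"
    by (simp add: El_def fps_to_fls_minus)
  have Q0: "Q \<noteq> 0" using Em1nz by (simp add: Q_def Em1)
  have EQ: "El - 1 = X * inverse Q"
    unfolding Q_def Em1 X_def[symmetric] inverse_divide using X0 by simp
  have W: "fps_to_fls (fps_const \<xi> * (fps_exp 1 - 1)) = fls_const \<xi> * (El - 1)"
    by (simp add: fls_times_fps_to_fls fps_const_to_fls El_def fps_to_fls_minus)
  have dW: "fps_to_fls (fps_deriv (fps_const \<xi> * (fps_exp 1 - 1))) = fls_const \<xi> * El"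
    unfolding El_def by (simp add: fls_times_fps_to_fls fps_const_to_fls fps_exp_deriv)
  have h3: "1 - (fls_const \<xi> + fls_const \<xi> * (El - 1))^i = - Z i" for i
    by (simp add: Z algebra_simps power_mult_distrib fls_const_power)
  have h4: "inverse (Z i) = D i * inverse (fls_const (of_nat i)) * inverse X" if "i \<ge> 1" for i
    using Znz[OF that] that X0 unfolding D_def X_def[symmetric]
    by (simp add: field_simps fls_const_mult_const[symmetric])
  have P: "inverse (\<Prod>i=1..N. 1 - (fls_const \<xi> + fls_const \<xi> * (El - 1))^i)
      = (\<Prod>i=1..N. - D i * inverse (fls_const (of_nat i)) * inverse X)"
    unfolding h3 prod_inversef[symmetric] by (intro prod.cong refl) (simp add: h4)
  also have "\<dots> = (\<Prod>i=1..N. (-1) * D i * inverse (fls_const (of_nat i)) * inverse X)"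
    by simp
  also have "\<dots> = (-1)^N * (\<Prod>i=1..N. D i) * (\<Prod>i=1..N. inverse (fls_const (of_nat i))) * inverse X ^ N"
    by (simp only: prod.distrib prod_constant card_atLeastAtMost) simp
  also have "(\<Prod>i=1..N. inverse (fls_const (of_nat i :: complex))) = inverse (fls_const (fact N))"
    unfolding fact_prod[of N] of_nat_prod fls_const_prod
    using prod_inversef[of "\<lambda>i. fls_const (of_nat i :: complex)" "{1..N}"] by (simp add: comp_def)
  finally have P: "inverse (\<Prod>i=1..N. 1 - (fls_const \<xi> + fls_const \<xi> * (El - 1))^i)
      = (-1)^N * (\<Prod>i=1..N. D i) * inverse (fls_const (fact N)) * inverse X ^ N" .
  have pw: "(fls_const \<xi> * (El - 1)) powi (-m-1) = fls_const \<xi> powi (-m-1) * X powi (-m-1) * Q powi (m+1)"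
    unfolding EQ power_int_mult_distrib power_int_inverse
    by (simp add: power_int_minus[symmetric] add.commute)
  have c1: "fls_const \<xi> powi (-m) = fls_const \<xi> powi (-m-1) * fls_const \<xi>"
    using power_int_add[of "fls_const \<xi>" "-m-1" 1] assms by simp
  have c2: "X powi (-(int N + m) - 1) = X powi (-m-1) * inverse X ^ N"
    using power_int_add[of X "-m-1" "- int N"] X0
    by (simp add: power_int_minus power_inverse algebra_simps)
  have c3: "fls_const (\<xi> powi (-m) * (-1)^N / fact N) = fls_const \<xi> powi (-m) * (-1)^N * inverse (fls_const (fact N))"
    by (simp add: fls_const_power_int fls_const_mult_const[symmetric] divide_inverse fls_const_inverse
                  fls_const_power)
  have "?L = (fls_const \<xi> * (El - 1)) powi (-m-1) *
      inverse (\<Prod>i=1..N. 1 - (fls_const \<xi> + fls_const \<xi> * (El - 1))^i) * (fls_const \<xi> * El)"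
    by (simp only: W dW)
  also have "\<dots> = ?R"
    unfolding P pw c3 c1 fls_X_power_int[symmetric] X_def[symmetric] c2
    by (simp add: El_def Q_def D_def Z_def X_def mult_ac)
  finally show ?thesis .
qed



lemma PiE_sum_bound:
  fixes k n :: nat
  assumes "k \<le> n" "finite I"
  shows "{j \<in> I \<rightarrow>\<^sub>E {..n}. sum j I = k} = {j \<in> I \<rightarrow>\<^sub>E {..k}. sum j I = k}"
proof (intro equalityI subsetI)
  fix j assume j: "j \<in> {j \<in> I \<rightarrow>\<^sub>E {..n}. sum j I = k}"
  have "j i \<le> k" if "i \<in> I" for i
    using member_le_sum[of i I j] that j assms by auto
  thus "j \<in> {j \<in> I \<rightarrow>\<^sub>E {..k}. sum j I = k}" using j by (auto simp: PiE_iff)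
qed (use assms in \<open>auto simp: PiE_iff\<close>)

lemma T_nth:
  fixes \<xi> :: complex and m :: int
  assumes "\<xi> \<noteq> 0"
  shows "fls_nth (fps_to_fls (fps_exp 1) * (fls_X / fps_to_fls (fps_exp 1 - 1)) powi (m+1) *
       (\<Prod>i=1..N. fls_const (of_nat i) * fls_X / fps_to_fls (fps_const (\<xi>^i) * fps_exp 1 ^ i - 1)))
       (int N + m) =
    (\<Sum>(u, v, j) \<in> {(u, v, j). u \<le> nat (int N + m) \<and> v \<le> nat (int N + m) \<and>
          j \<in> ({1..N} \<rightarrow>\<^sub>E {..nat (int N + m)}) \<and>
          int (u + v + (\<Sum>i = 1..N. j i)) = int N + m}.
       norlund v (m + 1) * (\<Prod>i = 1..N. apostol_bernoulli (\<xi> ^ i) (j i)) *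
       (\<Prod>i = 1..N. of_nat i ^ j i) /
       (fact u * fact v * (\<Prod>i = 1..N. fact (j i))))"
  (is "fls_nth ?T _ = ?S")
proof -
  define Qp where "Qp = (fls_X / fps_to_fls (fps_exp (1::complex) - 1)) powi (m+1)"
  define D where "D = (\<lambda>i. fls_const (of_nat i) * fls_X / fps_to_fls (fps_const (\<xi>^i) * fps_exp 1 ^ i - 1))"
  define Qf where "Qf = fls_regpart Qp"
  define Df where "Df = (\<lambda>i. fls_regpart (D i))"
  define E where "E = fps_exp (1::complex)"
  have sdE: "fls_subdegree (fps_to_fls (fps_exp (1::complex) - 1)) = 1"
  proof -
    have "subdegree (fps_exp (1::complex) - 1) = 1"
      by (rule subdegreeI) (auto simp: fps_exp_nth less_Suc_eq)
    thus ?thesis by (metis fls_subdegree_fls_to_fps of_nat_1)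
  qed
  have Em1nz: "fps_to_fls (fps_exp (1::complex) - 1) \<noteq> 0"
    using sdE by auto
  have sdQ: "fls_subdegree Qp \<ge> 0"
    unfolding Qp_def fls_subdegree_power_int using Em1nz sdE
    by (subst fls_divide_subdegree) auto
  have sdD: "fls_subdegree (D i) \<ge> 0" if "i \<in> {1..N}" for i
  proof -
    have "fls_const (of_nat i :: complex) * fls_X = fls_shift (-1) (fls_const (of_nat i))"
      by (rule fls_X_times_conv_shift(2))
    hence s1: "fls_subdegree (fls_const (of_nat i :: complex) * fls_X) = 1" using that by simp
    have "fls_const (of_nat i :: complex) * fls_X \<noteq> 0" using that by simp
    thus ?thesis unfolding D_def using Z_nz[of "\<xi>^i" i] that assms s1
      by (subst fls_divide_subdegree) auto
  qed
  have T: "?T = fps_to_fls (E * Qf * (\<Prod>i=1..N. Df i))"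
    unfolding fls_times_fps_to_fls fps_to_fls_prod Qf_def Df_def
    using sdQ sdD by (simp add: fls_regpart_to_fls_trivial E_def Qp_def D_def)
  have Ecoef: "E $ u = 1 / fact u" for u by (simp add: E_def fps_exp_nth)
  have Qcoef: "Qf $ v = norlund v (m+1) / fact v" for v
    by (simp add: Qf_def Qp_def norlund_def)
  have Dcoef: "Df i $ j = apostol_bernoulli (\<xi>^i) j / fact j * of_nat i ^ j" if "i \<in> {1..N}" for i j
    using D_nth[of i "\<xi>^i" j] that by (simp add: Df_def D_def)
  show ?thesis
  proof (cases "int N + m < 0")
    case True
    hence "?S = 0" by (intro sum.neutral) auto
    thus ?thesis unfolding T using True by (simp add: fps_to_fls_nth)
  next
    case False
    define n where "n = nat (int N + m)"
    have n: "int N + m = int n" using False by (simp add: n_def)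
    define S where "S = (\<lambda>k. {j \<in> {1..N} \<rightarrow>\<^sub>E {..n}. sum j {1..N} = k})"
    have "fls_nth ?T (int N + m) = (E * (Qf * (\<Prod>i=1..N. Df i))) $ n"
      unfolding T n by (simp add: fps_to_fls_nth mult.assoc)
    also have "\<dots> = (\<Sum>u=0..n. \<Sum>v=0..n-u. \<Sum>j\<in>S (n-u-v). E $ u * (Qf $ v * (\<Prod>i=1..N. Df i $ j i)))"
      unfolding fps_mult_nth sum_distrib_left S_def
      by (intro sum.cong refl, subst PiE_sum_bound) (auto simp: fps_prod_nth_PiE sum_distrib_left)
    also have "\<dots> = (\<Sum>u\<in>{..n}. \<Sum>v\<in>{..n-u}. \<Sum>j\<in>S (n-u-v).
       norlund v (m + 1) * (\<Prod>i = 1..N. apostol_bernoulli (\<xi> ^ i) (j i)) *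
       (\<Prod>i = 1..N. of_nat i ^ j i) /
       (fact u * fact v * (\<Prod>i = 1..N. fact (j i))))"
    proof (intro sum.cong refl)
      fix u v j
      have "(\<Prod>i=1..N. Df i $ j i) = (\<Prod>i=1..N. apostol_bernoulli (\<xi>^i) (j i) / fact (j i) * of_nat i ^ j i)"
        by (intro prod.cong refl) (simp add: Dcoef)
      also have "\<dots> = (\<Prod>i = 1..N. apostol_bernoulli (\<xi> ^ i) (j i)) * (\<Prod>i = 1..N. of_nat i ^ j i) /
                        (\<Prod>i = 1..N. fact (j i))"
        by (simp add: prod.distrib prod_dividef)
      finally show "E $ u * (Qf $ v * (\<Prod>i=1..N. Df i $ j i)) =
       norlund v (m + 1) * (\<Prod>i = 1..N. apostol_bernoulli (\<xi> ^ i) (j i)) *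
       (\<Prod>i = 1..N. of_nat i ^ j i) /
       (fact u * fact v * (\<Prod>i = 1..N. fact (j i)))"
        by (simp add: Ecoef Qcoef mult.assoc)
    qed (auto simp: atLeast0AtMost)
    also have "\<dots> = ?S"
    proof -
      have set: "{(u, v, j). u \<le> nat (int N + m) \<and> v \<le> nat (int N + m) \<and>
          j \<in> ({1..N} \<rightarrow>\<^sub>E {..nat (int N + m)}) \<and>
          int (u + v + (\<Sum>i = 1..N. j i)) = int N + m} = (SIGMA u:{..n}. SIGMA v:{..n-u}. S (n-u-v))"
        unfolding S_def n n_def[symmetric] by (auto simp del: of_nat_add of_nat_sum)
      show ?thesis unfolding set
        by (subst sum.Sigma, simp, simp add: S_def finite_PiE_filter,
            subst sum.Sigma, simp, simp add: S_def finite_PiE_filter) simp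
    qed
    finally show ?thesis .
  qed
qed


theorem proposition5p1:
  fixes N :: nat and m :: int and k :: nat and \<xi> :: complex
  assumes "N \<ge> 1" and "primitive_root_of_unity k \<xi>"
  shows "A_coeff m \<xi> N =
    ((-1) ^ N * \<xi> powi (-m) / fact N) *
    (\<Sum>(u, v, j) \<in> {(u, v, j). u \<le> nat (int N + m) \<and> v \<le> nat (int N + m) \<and>
          j \<in> ({1..N} \<rightarrow>\<^sub>E {..nat (int N + m)}) \<and>
          int (u + v + (\<Sum>i = 1..N. j i)) = int N + m}.
       norlund v (m + 1) * (\<Prod>i = 1..N. apostol_bernoulli (\<xi> ^ i) (j i)) *
       (\<Prod>i = 1..N. of_nat i ^ j i) /
       (fact u * fact v * (\<Prod>i = 1..N. fact (j i))))"
proof -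
  have \<xi>0: "\<xi> \<noteq> 0"
    using assms(2) unfolding primitive_root_of_unity_def by (auto simp: zero_power)
  define A where "A = inverse (\<Prod>i = 1..N. 1 - (fls_const \<xi> + fls_X) ^ i)"
  define Wf where "Wf = fps_const \<xi> * (fps_exp (1::complex) - 1)"
  have W0: "fps_nth Wf 0 = 0" by (simp add: Wf_def)
  have W1: "fps_nth Wf 1 \<noteq> 0" using \<xi>0 by (simp add: Wf_def fps_exp_nth)
  have Wnz: "Wf \<noteq> 0" using W1 by auto
  define T where "T = fps_to_fls (fps_exp 1) * (fls_X / fps_to_fls (fps_exp 1 - 1)) powi (m+1) *
       (\<Prod>i=1..N. fls_const (of_nat i) * fls_X / fps_to_fls (fps_const (\<xi>^i) * fps_exp 1 ^ i - 1))"
  have "A_coeff m \<xi> N = fls_nth A m"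
    by (simp add: A_coeff_def laurent_A A_def)
  also have "\<dots> = fls_residue (fls_X_intpow (-m-1) * A)"
    by (rule fls_residue_shift_nth)
  also have "\<dots> = fls_residue (fls_compose_fps (fls_X_intpow (-m-1) * A) Wf * fps_to_fls (fps_deriv Wf))"
    by (rule fls_residue_compose[symmetric]) (use W0 W1 in auto)
  also have "fls_compose_fps (fls_X_intpow (-m-1) * A) Wf =
     fps_to_fls Wf powi (-m-1) * inverse (\<Prod>i=1..N. 1 - (fls_const \<xi> + fps_to_fls Wf)^i)"
    unfolding A_def fls_compose_fps_mult[OF Wnz W0] fls_compose_fps_X_intpow[OF Wnz W0]
      fls_compose_fps_inverse[OF Wnz W0] fls_compose_fps_prod[OF Wnz W0]
      fls_compose_fps_diff[OF Wnz W0] fls_compose_fps_power[OF Wnz W0]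
      fls_compose_fps_add[OF Wnz W0] fls_compose_fps_1 fls_compose_fps_const fls_compose_fps_X
    by (rule refl)
  also have "fps_to_fls Wf powi (-m-1) * inverse (\<Prod>i=1..N. 1 - (fls_const \<xi> + fps_to_fls Wf)^i) *
      fps_to_fls (fps_deriv Wf) =
      fls_const (\<xi> powi (-m) * (-1)^N / fact N) * (fls_X_intpow (-(int N + m) - 1) * T)"
    unfolding Wf_def T_def by (rule integrand_eq[OF \<xi>0])
  also have "fls_residue \<dots> = (\<xi> powi (-m) * (-1)^N / fact N) * fls_nth T (int N + m)"
    by (simp only: fls_residue_fls_const_times fls_residue_shift_nth[symmetric])
  also have "fls_nth T (int N + m) = (\<Sum>(u, v, j) \<in> {(u, v, j). u \<le> nat (int N + m) \<and> v \<le> nat (int N + m) \<and>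
          j \<in> ({1..N} \<rightarrow>\<^sub>E {..nat (int N + m)}) \<and>
          int (u + v + (\<Sum>i = 1..N. j i)) = int N + m}.
       norlund v (m + 1) * (\<Prod>i = 1..N. apostol_bernoulli (\<xi> ^ i) (j i)) *
       (\<Prod>i = 1..N. of_nat i ^ j i) /
       (fact u * fact v * (\<Prod>i = 1..N. fact (j i))))"
    unfolding T_def by (rule T_nth[OF \<xi>0])
  finally show ?thesis by (simp add: mult.commute)
qed

end
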